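(* Let $f(x)=\frac{x}{1+rx+sx^2}$. The $(n,k)$-th entry of the inverse of the Riordan array $(f'(x),f(x))$ (an element of the derivative subgroup) is $$t_{n,k}=\sum_{j=0}^{n+1}\binom{n+1}{j}\binom{j}{n-k-j}s^{\,n-k-j}r^{\,2j+k-n}.$$
   Context: A Riordan array $(g(x),f(x))$ with $g(0)\ne0$, $f(0)=0$, $f'(0)\ne0$ is the lower-triangular matrix with $(n,k)$ entry $[x^n]g(x)f(x)^k$; products correspond to $(g,f)(u,v)=(g\,u(f),v(f))$ and inverses to $(g,f)^{-1}=(1/g(\bar f),\bar f)$ with $\bar f$ the compositional inverse. The derivative subgroup consists of arrays $(f'(x),f(x))$. $\binom{j}{m}=0$ unless $0\le m\le j$. *)

theory Defs
  imports "HOL-Computational_Algebra.Formal_Power_Series"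
begin

definition riordan :: "'a::comm_ring_1 fps \<Rightarrow> 'a fps \<Rightarrow> nat \<Rightarrow> nat \<Rightarrow> 'a" where
  "riordan g f n k = fps_nth (g * f ^ k) n"

text \<open>Product of infinite lower-triangular matrices (the sum is finite since the left factor
  vanishes above the diagonal).\<close>
definition lt_mult :: "(nat \<Rightarrow> nat \<Rightarrow> 'a::comm_ring_1) \<Rightarrow> (nat \<Rightarrow> nat \<Rightarrow> 'a) \<Rightarrow> nat \<Rightarrow> nat \<Rightarrow> 'a" where
  "lt_mult A B n k = (\<Sum>j\<le>n. A n j * B j k)"

definition id_matrix :: "nat \<Rightarrow> nat \<Rightarrow> 'a::comm_ring_1" where
  "id_matrix n k = (if n = k then 1 else 0)"

definition binom_int :: "nat \<Rightarrow> int \<Rightarrow> 'a::comm_ring_1" where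
  "binom_int j m = (if 0 \<le> m \<and> m \<le> int j then of_nat (j choose nat m) else 0)"

definition fRS :: "'a::field \<Rightarrow> 'a \<Rightarrow> 'a fps" where
  "fRS r s = fps_X * inverse (1 + fps_const r * fps_X + fps_const s * fps_X ^ 2)"

text \<open>The claimed entries t_{n,k}. Whenever the binomial factor is nonzero we have
  0 \<le> n-k-j and 0 \<le> 2j+k-n, so the natural-number exponents below are the true ones.\<close>
definition t_entry :: "'a::field \<Rightarrow> 'a \<Rightarrow> nat \<Rightarrow> nat \<Rightarrow> 'a" where
  "t_entry r s n k = (\<Sum>j=0..n+1. of_nat ((n+1) choose j)
      * binom_int j (int n - int k - int j)
      * s ^ nat (int n - int k - int j) * r ^ nat (2 * int j + int k - int n))"

end

theory Submission
  imports Defs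
begin

unbundle fps_syntax

lemma pow_nth_low: "(b::'a::comm_ring_1 fps) $ 0 = 0 \<Longrightarrow> m < j \<Longrightarrow> (b ^ j) $ m = 0"
  using startsby_zero_power_prefix by blast

lemma riordan_lower:
  fixes a b :: "'a::comm_ring_1 fps"
  assumes "b $ 0 = 0" "n < k" shows "riordan a b n k = 0"
  unfolding riordan_def fps_mult_nth using assms
  by (intro sum.neutral) (auto simp: pow_nth_low)

lemma comp_trunc:
  fixes E b :: "'a::comm_ring_1 fps"
  assumes b0: "b $ 0 = 0" and "m \<le> n"
  shows "(E oo b) $ m = (\<Sum>j\<le>n. E $ j * (b ^ j) $ m)"
proof -
  have "(E oo b) $ m = (\<Sum>j=0..m. E $ j * (b ^ j) $ m)" by (rule fps_compose_nth)
  also have "\<dots> = (\<Sum>j=0..n. E $ j * (b ^ j) $ m)"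
    using assms by (intro sum.mono_neutral_left) (auto simp: pow_nth_low)
  finally show ?thesis by (simp add: atLeast0AtMost)
qed

lemma riordan_mult:
  fixes a b c d :: "'a::comm_ring_1 fps"
  assumes b0: "b $ 0 = 0"
  shows "lt_mult (riordan a b) (riordan c d) n k = (a * ((c * d ^ k) oo b)) $ n"
proof -
  define E where "E = c * d ^ k"
  have "(a * (E oo b)) $ n = (\<Sum>i=0..n. a $ i * (E oo b) $ (n - i))" by (rule fps_mult_nth)
  also have "\<dots> = (\<Sum>i=0..n. a $ i * (\<Sum>j\<le>n. E $ j * (b ^ j) $ (n - i)))"
    using b0 by (intro sum.cong refl) (simp add: comp_trunc[where n=n])
  also have "\<dots> = (\<Sum>j\<le>n. E $ j * (\<Sum>i=0..n. a $ i * (b ^ j) $ (n - i)))"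
    by (simp add: sum_distrib_left sum_distrib_right mult_ac sum.swap[of _ "{0..n}"])
  also have "\<dots> = (\<Sum>j\<le>n. (a * b ^ j) $ n * E $ j)"
    by (simp add: fps_mult_nth mult_ac)
  finally show ?thesis unfolding lt_mult_def riordan_def E_def by simp
qed

lemma lt_assoc:
  assumes B: "\<And>j i. j < i \<Longrightarrow> B j i = 0"
  shows "lt_mult A (lt_mult B C) = lt_mult (lt_mult A B) C"
proof (intro ext)
  fix n k
  have "lt_mult A (lt_mult B C) n k = (\<Sum>j\<le>n. A n j * (\<Sum>i\<le>n. B j i * C i k))"
    unfolding lt_mult_def
  proof (intro sum.cong refl)
    fix j assume "j \<in> {..n}"
    then show "A n j * (\<Sum>i\<le>j. B j i * C i k) = A n j * (\<Sum>i\<le>n. B j i * C i k)"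
      by (intro arg_cong[where f="\<lambda>x. A n j * x"] sum.mono_neutral_left) (auto simp: B)
  qed
  also have "\<dots> = lt_mult (lt_mult A B) C n k"
    unfolding lt_mult_def
  proof -
    have "(\<Sum>j\<le>n. A n j * (\<Sum>i\<le>n. B j i * C i k)) = (\<Sum>j\<le>n. \<Sum>i\<le>n. A n j * B j i * C i k)"
      by (simp add: sum_distrib_left mult.assoc)
    also have "\<dots> = (\<Sum>i\<le>n. \<Sum>j\<le>n. A n j * B j i * C i k)" by (rule sum.swap)
    also have "\<dots> = (\<Sum>i\<le>n. (\<Sum>j\<le>n. A n j * B j i) * C i k)"
      by (simp add: sum_distrib_right)
    finally show "(\<Sum>j\<le>n. A n j * (\<Sum>i\<le>n. B j i * C i k)) = (\<Sum>i\<le>n. (\<Sum>j\<le>n. A n j * B j i) * C i k)" .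
  qed
  finally show "lt_mult A (lt_mult B C) n k = lt_mult (lt_mult A B) C n k" .
qed

lemma lt_id_left: "lt_mult id_matrix A = A"
proof (intro ext)
  fix n k
  have "lt_mult id_matrix A n k = (\<Sum>j\<le>n. if n = j then A j k else 0)"
    unfolding lt_mult_def id_matrix_def by (intro sum.cong) auto
  then show "lt_mult id_matrix A n k = A n k" by simp
qed

lemma lt_id_right:
  assumes "\<And>n k. n < k \<Longrightarrow> A n k = 0"
  shows "lt_mult A id_matrix = A"
proof (intro ext)
  fix n k
  have "lt_mult A id_matrix n k = (\<Sum>j\<le>n. if j = k then A n j else 0)"
    unfolding lt_mult_def id_matrix_def by (intro sum.cong) auto
  then show "lt_mult A id_matrix n k = A n k" using assms[of n k] by (cases "k \<le> n") auto
qed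

lemma deriv_subgroup_inverse:
  fixes f :: "'a::field fps"
  assumes f0: "f $ 0 = 0" and f1: "f $ 1 \<noteq> 0"
  shows "lt_mult (riordan (fps_deriv f) f) (riordan (fps_deriv (fps_inv f)) (fps_inv f)) = id_matrix"
proof (intro ext)
  fix n k
  define h where "h = fps_inv f"
  have hf: "h oo f = fps_X" unfolding h_def by (rule fps_inv[OF f0 f1])
  have "fps_deriv f * ((fps_deriv h * h ^ k) oo f) = fps_deriv f * (fps_deriv h oo f) * (h oo f) ^ k"
    using f0 by (simp add: fps_compose_mult_distrib fps_compose_power mult_ac)
  also have "fps_deriv f * (fps_deriv h oo f) = fps_deriv (h oo f)"
    using f0 by (simp add: fps_compose_deriv mult_ac)
  finally have "fps_deriv f * ((fps_deriv h * h ^ k) oo f) = fps_X ^ k"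
    by (simp add: hf)
  then show "lt_mult (riordan (fps_deriv f) f) (riordan (fps_deriv (fps_inv f)) (fps_inv f)) n k = id_matrix n k"
    using f0 by (simp add: riordan_mult h_def id_matrix_def fps_X_power_nth)
qed

definition Pp :: "'a::field \<Rightarrow> 'a \<Rightarrow> 'a fps" where
  "Pp r s = 1 + fps_const r * fps_X + fps_const s * fps_X ^ 2"

lemma Pp_nth: "(F * Pp r s) $ n = F $ n + r * (if n < 1 then 0 else F $ (n - 1))
    + s * (if n < 2 then 0 else F $ (n - 2))"
proof -
  have "F * Pp r s = F + fps_const r * (fps_X ^ 1 * F) + fps_const s * (fps_X ^ 2 * F)"
    by (simp add: Pp_def algebra_simps)
  then show ?thesis by (simp only: fps_add_nth fps_const_mult_left fps_X_power_mult_nth) simp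
qed

definition cc :: "'a::field \<Rightarrow> 'a \<Rightarrow> nat \<Rightarrow> int \<Rightarrow> 'a" where
  "cc r s N i = (if i < 0 then 0 else (Pp r s ^ N) $ nat i)"

lemma cc_rec: "cc r s (Suc N) i = cc r s N i + r * cc r s N (i - 1) + s * cc r s N (i - 2)"
proof (cases "i < 0")
  case True then show ?thesis by (simp add: cc_def)
next
  case False
  then obtain n where i: "i = int n" by (metis nonneg_eq_int not_less)
  have "(Pp r s ^ Suc N) $ n = (Pp r s ^ N * Pp r s) $ n" by (simp add: mult.commute)
  also have "\<dots> = (Pp r s ^ N) $ n + r * (if n < 1 then 0 else (Pp r s ^ N) $ (n - 1))
    + s * (if n < 2 then 0 else (Pp r s ^ N) $ (n - 2))" by (rule Pp_nth)
  finally show ?thesis unfolding cc_def i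
    by (auto simp add: nat_diff_distrib)
qed

lemma cc_0: "cc r s 0 i = (if i = 0 then 1 else 0)"
  by (auto simp: cc_def)

lemma cc_sym: "cc r s N (int N + int j) = s ^ j * cc r s N (int N - int j)"
proof (induction N arbitrary: j)
  case 0
  then show ?case by (simp add: cc_0)
next
  case (Suc N)
  show ?case
  proof (cases j)
    case 0 then show ?thesis by simp
  next
    case (Suc j')
    have e1: "cc r s N (int N + int (j' + 2)) = s ^ (j' + 2) * cc r s N (int N - int (j' + 2))"
      by (rule Suc.IH)
    have e2: "cc r s N (int N + int (j' + 1)) = s ^ (j' + 1) * cc r s N (int N - int (j' + 1))"
      by (rule Suc.IH)
    have e3: "cc r s N (int N + int j') = s ^ j' * cc r s N (int N - int j')"
      by (rule Suc.IH)
    have i1: "int (Suc N) + int j - 1 = int N + int (j' + 1)" "int (Suc N) + int j = int N + int (j' + 2)"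
      "int (Suc N) + int j - 2 = int N + int j'"
      "int (Suc N) - int j = int N - int j'" "int (Suc N) - int j - 1 = int N - int (j'+1)"
      "int (Suc N) - int j - 2 = int N - int (j'+2)"
      using Suc by auto
    have A: "cc r s (Suc N) (int (Suc N) + int j) = cc r s N (int (Suc N) + int j)
       + r * cc r s N (int (Suc N) + int j - 1) + s * cc r s N (int (Suc N) + int j - 2)"
      by (rule cc_rec)
    have B: "cc r s (Suc N) (int (Suc N) - int j) = cc r s N (int (Suc N) - int j)
       + r * cc r s N (int (Suc N) - int j - 1) + s * cc r s N (int (Suc N) - int j - 2)"
      by (rule cc_rec)
    show ?thesis using A[unfolded i1] B[unfolded i1] e1 e2 e3 Suc
      by (simp add: algebra_simps)
  qed
qed

lemma Pp0: "Pp r s $ 0 = 1" by (simp add: Pp_def)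

lemma PXdP: "Pp r s - fps_X * fps_deriv (Pp r s) = 1 - fps_const s * fps_X ^ 2"
  by (simp add: Pp_def algebra_simps power2_eq_square fps_deriv_power)

lemma fRS_eq: "fRS r s = fps_X * inverse (Pp r s)"
  by (simp add: fRS_def Pp_def)

lemma fRS_deriv: "fps_deriv (fRS r s) = inverse (Pp r s) ^ 2 * (1 - fps_const s * fps_X ^ 2)"
proof -
  define Q where "Q = inverse (Pp r s)"
  have QP: "Q * Pp r s = 1" unfolding Q_def by (rule inverse_mult_eq_1) (simp add: Pp0)
  have dQ: "fps_deriv Q = - fps_deriv (Pp r s) * Q ^ 2"
    unfolding Q_def by (rule fps_inverse_deriv) (simp add: Pp0)
  have QQ: "Q = Q ^ 2 * Pp r s" using QP by (simp add: power2_eq_square mult.assoc)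
  have "fps_deriv (fRS r s) = fps_X * fps_deriv Q + Q"
    by (simp add: fRS_eq Q_def)
  also have "\<dots> = Q ^ 2 * (Pp r s - fps_X * fps_deriv (Pp r s))"
    by (subst (2) QQ) (simp add: dQ algebra_simps)
  finally show ?thesis by (simp add: PXdP Q_def)
qed

lemma fRS0: "fRS r s $ 0 = 0" by (simp add: fRS_eq)
lemma fRS1: "fRS r s $ 1 = 1" by (simp add: fRS_eq Pp0)

lemma key_coeff:
  "(fps_deriv (fRS r s) * fRS r s ^ k * Pp r s ^ (n + 1)) $ n = (if n = k then 1 else 0)"
proof -
  define Q where "Q = inverse (Pp r s)"
  define W :: "'a fps" where "W = 1 - fps_const s * fps_X ^ 2"
  define P where "P = Pp r s"
  have QP: "Q * P = 1" unfolding Q_def P_def by (rule inverse_mult_eq_1) (simp add: Pp0)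
  have E: "fps_deriv (fRS r s) * fRS r s ^ k * Pp r s ^ (n + 1) = fps_X ^ k * (Q ^ (k + 2) * P ^ (n + 1) * W)"
    unfolding fRS_deriv unfolding fRS_eq Q_def W_def P_def
    by (simp add: power_mult_distrib power_add mult_ac power2_eq_square)
  consider "n < k" | "n = k" | "k < n" by linarith
  then show ?thesis
  proof cases
    case 1 then show ?thesis unfolding E by (simp add: fps_X_power_mult_nth)
  next
    case 2
    have "Q ^ (k + 2) * P ^ (n + 1) = Q * (Q * P) ^ (n + 1)"
      using 2 by (simp add: power_mult_distrib algebra_simps)
    also have "\<dots> = Q" by (simp add: QP)
    finally have G: "Q ^ (k + 2) * P ^ (n + 1) * W = Q * W" by (simp only:)
    have "(Q * W) $ 0 = 1" by (simp add: Q_def W_def Pp0)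
    then show ?thesis unfolding E G using 2
      by (simp add: fps_X_power_mult_nth)
  next
    case 3
    define N where "N = n - k - 1"
    have nN: "n + 1 = (k + 2) + N" "n - k = N + 1" using 3 by (auto simp: N_def)
    have "Q ^ (k + 2) * P ^ (n + 1) = (Q * P) ^ (k + 2) * P ^ N"
      unfolding nN by (simp add: power_add power_mult_distrib)
    also have "\<dots> = P ^ N" by (simp add: QP)
    finally have F: "Q ^ (k + 2) * P ^ (n + 1) * W = P ^ N - fps_const s * (fps_X ^ 2 * P ^ N)"
      by (simp add: W_def algebra_simps)
    have "(fps_X ^ k * (Q ^ (k + 2) * P ^ (n + 1) * W)) $ n = (P ^ N) $ (N + 1) - s * (if N + 1 < 2 then 0 else (P ^ N) $ (N + 1 - 2))"
      using 3 unfolding F by (simp add: fps_X_power_mult_nth nN)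
    also have "\<dots> = cc r s N (int N + int 1) - s * cc r s N (int N - int 1)"
      by (auto simp: cc_def P_def nat_diff_distrib nat_add_distrib)
    also have "\<dots> = 0" using cc_sym[of r s N 1] by simp
    finally show ?thesis unfolding E using 3 by simp
  qed
qed

lemma Qpow_nth:
  "((fps_const r + fps_const s * fps_X) ^ j) $ l
     = (if l \<le> j then of_nat (j choose l) * s ^ l * r ^ (j - l) else (0::'a::field))"
proof (induction j arbitrary: l)
  case 0 then show ?case by auto
next
  case (Suc j)
  define H where "H = (fps_const r + fps_const s * fps_X) ^ j"
  have "(fps_const r + fps_const s * fps_X) ^ Suc j = fps_const r * H + fps_const s * (fps_X * H)"
    by (simp add: H_def distrib_right mult.assoc)
  have IH: "H $ l = (if l \<le> j then of_nat (j choose l) * s ^ l * r ^ (j - l) else 0)" for l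
    unfolding H_def by (rule Suc.IH)
  have "((fps_const r + fps_const s * fps_X) ^ Suc j) $ l
      = r * H $ l + s * (if l = 0 then 0 else H $ (l - 1))"
    unfolding \<open>(fps_const r + fps_const s * fps_X) ^ Suc j = fps_const r * H + fps_const s * (fps_X * H)\<close>
    by simp
  also have "\<dots> = (if l \<le> Suc j then of_nat (Suc j choose l) * s ^ l * r ^ (Suc j - l) else 0)"
  proof (cases l)
    case 0 then show ?thesis by (simp add: IH)
  next
    case (Suc l')
    consider "l' < j" | "l' = j" | "l' > j" by linarith
    then show ?thesis
    proof cases
      case 1
      have rr: "r ^ (j - l') = r * r ^ (j - Suc l')" using 1
        by (metis Suc_diff_Suc power_Suc)
      show ?thesis using 1 Suc by (simp add: IH rr algebra_simps)
    next
      case 2 then show ?thesis using Suc by (simp add: IH)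
    next
      case 3 then show ?thesis using Suc by (simp add: IH)
    qed
  qed
  finally show ?case .
qed

lemma Pp_pow_nth:
  "(Pp r s ^ N) $ i = (\<Sum>j\<le>N. of_nat (N choose j) *
      (if i < j then 0 else ((fps_const r + fps_const s * fps_X) ^ j) $ (i - j)))"
proof -
  have "Pp r s = fps_X * (fps_const r + fps_const s * fps_X) + 1"
    by (simp add: Pp_def algebra_simps power2_eq_square)
  then have "Pp r s ^ N = (\<Sum>j\<le>N. of_nat (N choose j) * (fps_X ^ j * (fps_const r + fps_const s * fps_X) ^ j))"
    by (simp add: binomial_ring power_mult_distrib)
  then show ?thesis
    by (simp add: fps_sum_nth fps_of_nat fps_X_power_mult_nth)
qed

lemma t_entry_eq:
  fixes r s :: "'a::field"
  shows "t_entry r s n k = (if k \<le> n then (Pp r s ^ (n + 1)) $ (n - k) else 0)"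
proof (cases "k \<le> n")
  case False
  have "t_entry r s n k = 0" unfolding t_entry_def binom_int_def using False by (intro sum.neutral) auto
  then show ?thesis using False by simp
next
  case True
  define i where "i = n - k"
  have "t_entry r s n k = (\<Sum>j\<le>n+1. of_nat ((n+1) choose j)
      * (if i < j then 0 else ((fps_const r + fps_const s * fps_X) ^ j) $ (i - j)))"
    unfolding t_entry_def atLeast0AtMost
  proof (intro sum.cong refl)
    fix j
    have ii: "int n - int k - int j = int i - int j" "2 * int j + int k - int n = 2 * int j - int i"
      using True by (auto simp: i_def)
    have nn: "nat (2 * int j - int i) = j + j - i" "nat (int i - int j) = i - j" by auto
    show "of_nat ((n+1) choose j) * binom_int j (int n - int k - int j) * s ^ nat (int n - int k - int j)
        * r ^ nat (2 * int j + int k - int n) = of_nat ((n+1) choose j)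
      * (if i < j then 0 else ((fps_const r + fps_const s * fps_X) ^ j) $ (i - j))"
      unfolding ii nn Qpow_nth binom_int_def
      by (auto simp: nat_diff_distrib of_nat_diff)
  qed
  also have "\<dots> = (Pp r s ^ (n + 1)) $ i" by (rule Pp_pow_nth[symmetric])
  finally show ?thesis using True by (simp add: i_def)
qed

lemma TR_id:
  fixes r s :: "'a::field"
  shows "lt_mult (t_entry r s) (riordan (fps_deriv (fRS r s)) (fRS r s)) = id_matrix"
proof (intro ext)
  fix n k
  have "lt_mult (t_entry r s) (riordan (fps_deriv (fRS r s)) (fRS r s)) n k
      = (\<Sum>j=0..n. (fps_deriv (fRS r s) * fRS r s ^ k) $ j * (Pp r s ^ (n + 1)) $ (n - j))"
    unfolding lt_mult_def riordan_def atLeast0AtMost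
    by (intro sum.cong refl) (simp add: t_entry_eq mult.commute)
  also have "\<dots> = (fps_deriv (fRS r s) * fRS r s ^ k * Pp r s ^ (n + 1)) $ n"
    by (simp add: fps_mult_nth)
  finally show "lt_mult (t_entry r s) (riordan (fps_deriv (fRS r s)) (fRS r s)) n k = id_matrix n k"
    using key_coeff[of r s k n] by (simp add: id_matrix_def)
qed

theorem mainTheorem13:
  fixes r s :: "'a::field"
  defines "f \<equiv> fRS r s"
  shows "(\<forall>n k. n < k \<longrightarrow> t_entry r s n k = 0)
       \<and> lt_mult (riordan (fps_deriv f) f) (t_entry r s) = id_matrix
       \<and> lt_mult (t_entry r s) (riordan (fps_deriv f) f) = id_matrix"
proof -
  define R where "R = riordan (fps_deriv f) f"
  define S where "S = riordan (fps_deriv (fps_inv f)) (fps_inv f)"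
  define T where "T = t_entry r s"
  have f0: "f $ 0 = 0" and f1: "f $ 1 \<noteq> 0" using fRS0[of r s] fRS1[of r s] by (simp_all add: f_def)
  have Tl: "\<forall>n k. n < k \<longrightarrow> t_entry r s n k = 0" by (simp add: t_entry_eq)
  have TR: "lt_mult T R = id_matrix" unfolding T_def R_def f_def by (rule TR_id)
  have RS: "lt_mult R S = id_matrix" unfolding R_def S_def by (rule deriv_subgroup_inverse[OF f0 f1])
  have Rl: "\<And>j i. j < i \<Longrightarrow> R j i = 0" unfolding R_def using f0 by (simp add: riordan_lower)
  have "T = lt_mult T id_matrix" using Tl by (simp add: lt_id_right T_def)
  also have "\<dots> = lt_mult T (lt_mult R S)" by (simp add: RS)
  also have "\<dots> = lt_mult (lt_mult T R) S" by (rule lt_assoc[OF Rl])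
  also have "\<dots> = S" by (simp add: TR lt_id_left)
  finally have TS: "T = S" .
  show ?thesis using Tl TR RS TS unfolding R_def T_def by simp
qed

end
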